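(* Let $V^*$ be as below. (i) For $(t,x)$ with $0\le t<1$ and $x>C^*\sqrt{1-t}$, $\mathcal{L}V^*(t,x)=0$. (ii) For $(t,x)$ with $0\le t<1$ and $x<C^*\sqrt{1-t}$, $\mathcal{L}V^*(t,x)\le0$.
   Context: For a function $\xi(t,x)$ of class $C^{1}$ in $t$ and $C^{2}$ in $x$, define $$\mathcal{L}\xi=\frac{\partial\xi}{\partial t}-\frac{x}{1-t}\frac{\partial\xi}{\partial x}+\frac12\frac{\partial^2\xi}{\partial x^2}.$$ $\Phi$ is the standard normal distribution function. $B^*\approx0.84$ is the unique positive solution of $\sqrt{2\pi}(1-B^2)e^{B^2/2}\Phi(B)=B$. Define $U(t,x)=\sqrt{2\pi(1-t)}(1-(B^* )^2)e^{x^2/(2(1-t))}\Phi(x/\sqrt{1-t})$ for $x<B^*\sqrt{1-t}$, and $U(t,x)=x$ otherwise. Set $f=U-x$. For $C\le B^*$ let $v(C)=\frac{1}{\Phi(-C)}[(1-(B^* )^2)\Phi(C)-Ce^{-C^2/2}/\sqrt{2\pi}]$ and $u(C)=1-(B^* )^2-(1-C^2)\Phi(-C)-\frac{C}{\sqrt{2\pi}}e^{-C^2/2}$. $C^*$ is the unique negative zero of $u$. $V^*(t,x)=\sqrt{1-t}\sqrt{2\pi}\Phi(-x/\sqrt{1-t})e^{x^2/(2(1-t))}v(C^* )$ for $x>C^*\sqrt{1-t}$, and $V^*(t,x)=f(t,x)$ for $x\le C^*\sqrt{1-t}$. *)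

theory Defs
  imports "HOL-Probability.Probability"
begin

definition Phi :: "real \<Rightarrow> real" where
  "Phi x = set_lebesgue_integral lborel {..x} std_normal_density"

definition Lop :: "(real \<Rightarrow> real \<Rightarrow> real) \<Rightarrow> real \<Rightarrow> real \<Rightarrow> real" where
  "Lop \<xi> t x = deriv (\<lambda>s. \<xi> s x) t - x / (1 - t) * deriv (\<lambda>y. \<xi> t y) x
      + 1/2 * deriv (\<lambda>y. deriv (\<lambda>z. \<xi> t z) y) x"

definition Bstar :: real where
  "Bstar = (THE B. 0 < B \<and> sqrt (2*pi) * (1 - B\<^sup>2) * exp (B\<^sup>2/2) * Phi B = B)"

definition U :: "real \<Rightarrow> real \<Rightarrow> real" where
  "U t x = (if x < Bstar * sqrt (1 - t)
            then sqrt (2*pi*(1 - t)) * (1 - Bstar\<^sup>2) * exp (x\<^sup>2 / (2*(1 - t))) * Phi (x / sqrt (1 - t))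
            else x)"

definition f :: "real \<Rightarrow> real \<Rightarrow> real" where
  "f t x = U t x - x"

definition v :: "real \<Rightarrow> real" where
  "v C = 1 / Phi (-C) * ((1 - Bstar\<^sup>2) * Phi C - C * exp (-C\<^sup>2/2) / sqrt (2*pi))"

definition u :: "real \<Rightarrow> real" where
  "u C = 1 - Bstar\<^sup>2 - (1 - C\<^sup>2) * Phi (-C) - C / sqrt (2*pi) * exp (-C\<^sup>2/2)"

definition Cstar :: real where
  "Cstar = (THE C. C < 0 \<and> u C = 0)"

definition Vstar :: "real \<Rightarrow> real \<Rightarrow> real" where
  "Vstar t x = (if x > Cstar * sqrt (1 - t)
     then sqrt (1 - t) * sqrt (2*pi) * Phi (- x / sqrt (1 - t)) * exp (x\<^sup>2 / (2*(1 - t))) * v Cstar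
     else f t x)"

end

theory Submission
  imports Defs
begin

lemma hb1: "has_bochner_integral lborel std_normal_density 1"
  using std_normal_moment_even[of 0] by simp
lemma int1: "integrable lborel std_normal_density" and intval: "integral\<^sup>L lborel std_normal_density = 1"
  using hb1 has_bochner_integral_iff by blast+
lemma setint: "set_integrable lborel A std_normal_density" if "A \<in> sets lborel"
  using int1 that unfolding set_integrable_def by (intro integrable_mult_indicator) auto

lemma dens_cont: "continuous_on S std_normal_density"
  unfolding std_normal_density_def by (intro continuous_intros) auto

lemma Phi_split: assumes "a \<le> y"
  shows "Phi y = Phi a + (LBINT t=a..y. std_normal_density t)"
proof -
  have eq: "{..y} = {..a} \<union> {a<..y}" using assms by auto
  have "Phi y = (LBINT t:{..a} \<union> {a<..y}. std_normal_density t)"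
    unfolding Phi_def by (simp only: eq)
  also have "\<dots> = Phi a + (LBINT t:{a<..y}. std_normal_density t)"
    unfolding Phi_def by (rule set_integral_Un) (auto intro: setint)
  finally have "Phi y = Phi a + (LBINT t:{a<..y}. std_normal_density t)" .
  moreover have "(LBINT t=a..y. std_normal_density t) = (LBINT t:{a<..y}. std_normal_density t)"
    using assms by (intro interval_integral_Ioc) simp
  ultimately show ?thesis by simp
qed

lemma Phi_deriv: "(Phi has_real_derivative std_normal_density x) (at x)"
proof -
  let ?a = "x - 1" and ?b = "x + 1"
  have "((\<lambda>u. LBINT y=?a..u. std_normal_density y) has_vector_derivative std_normal_density x) (at x within {?a..?b})"
    by (rule interval_integral_FTC2) (auto intro: dens_cont)
  then have "((\<lambda>u. Phi ?a + (LBINT y=?a..u. std_normal_density y)) has_vector_derivative std_normal_density x) (at x within {?a..?b})"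
    by (auto intro!: derivative_eq_intros)
  then have "(Phi has_vector_derivative std_normal_density x) (at x within {?a..?b})"
    by (rule has_vector_derivative_weaken) (auto simp: Phi_split)
  then show ?thesis
    by (simp add: at_within_Icc_at has_real_derivative_iff_has_vector_derivative)
qed

lemma Phi_0: "Phi 0 = 1/2"
proof -
  have e: "std_normal_density (-x) = std_normal_density x" for x
    by (simp add: std_normal_density_def)
  have "Phi 0 = (LBINT t:{x. - x \<in> {..0}}. std_normal_density (- t))"
    unfolding Phi_def by (rule set_integral_reflect)
  also have "\<dots> = (LBINT t:{0..}. std_normal_density t)"
    by (simp add: e atLeast_def)
  also have "\<dots> = (LBINT t:{0<..}. std_normal_density t)"
    by (rule set_integral_discrete_difference[where X="{0}"]) auto
  finally have 1: "Phi 0 = (LBINT t:{0<..}. std_normal_density t)" .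
  have "1 = (LBINT t:UNIV. std_normal_density t)"
    using intval by (simp add: set_lebesgue_integral_def)
  also have "UNIV = {..0::real} \<union> {0<..}" by auto
  also have "(LBINT t:{..0::real} \<union> {0<..}. std_normal_density t) = Phi 0 + (LBINT t:{0<..}. std_normal_density t)"
    unfolding Phi_def by (subst set_integral_Un) (auto simp: setint)
  finally show ?thesis using 1 by simp
qed

lemma Phi_le1: "Phi x \<le> 1"
proof -
  have "Phi x = integral\<^sup>L lborel (\<lambda>t. indicator {..x} t * std_normal_density t)"
    unfolding Phi_def set_lebesgue_integral_def by simp
  also have "\<dots> \<le> integral\<^sup>L lborel std_normal_density"
    apply (rule integral_mono)
    using setint[of "{..x}"] int1 by (auto simp: set_integrable_def indicator_def normal_density_nonneg)
  finally show ?thesis using intval by simp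
qed

lemma Phi_mono: "a \<le> b \<Longrightarrow> Phi a \<le> Phi b"
  by (rule DERIV_nonneg_imp_nondecreasing[of a b Phi]) (auto intro: Phi_deriv)

lemma R_deriv: assumes "B\<^sup>2 \<noteq> 1"
  shows "((\<lambda>B. B * exp (-B\<^sup>2/2) / (1 - B\<^sup>2)) has_real_derivative
     exp (-B\<^sup>2/2) * (1 + B^4) / (1 - B\<^sup>2)\<^sup>2) (at B)"
proof -
  have ne: "1 - B\<^sup>2 \<noteq> 0" using assms by auto
  have d1: "((\<lambda>B. exp(-B\<^sup>2/2)) has_real_derivative exp(-B\<^sup>2/2) * (-B)) (at B)"
    by (auto intro!: derivative_eq_intros)
  have d2: "((\<lambda>B. 1 - B\<^sup>2) has_real_derivative -2*B) (at B)"
    by (auto intro!: derivative_eq_intros)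
  show ?thesis
    apply (rule DERIV_cong[OF DERIV_divide[OF DERIV_mult[OF DERIV_ident d1] d2 ne]])
    using ne apply (simp add: divide_simps)
    apply (simp add: power2_eq_square eval_nat_numeral algebra_simps)
    done
qed

definition EB :: "real \<Rightarrow> real" where
  "EB B = Phi B - (B * exp (-B\<^sup>2/2) / (1 - B\<^sup>2)) / sqrt (2*pi)"

lemma EB_deriv: assumes "0 < B" "B < 1"
  shows "\<exists>D. (EB has_real_derivative D) (at B) \<and> D < 0"
proof -
  have ne: "B\<^sup>2 \<noteq> 1" "B\<^sup>2 < 1" using assms power_strict_mono[of B 1 2] by auto
  let ?Rp = "exp (-B\<^sup>2/2) * (1 + B^4) / (1 - B\<^sup>2)\<^sup>2"
  have "(EB has_real_derivative (std_normal_density B - ?Rp / sqrt (2*pi))) (at B)"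
    unfolding EB_def[abs_def] by (intro DERIV_diff Phi_deriv DERIV_cdivide R_deriv ne)
  moreover have "std_normal_density B - ?Rp / sqrt (2*pi) < 0"
  proof -
    have pos: "0 < (1 - B\<^sup>2)\<^sup>2" using ne by auto
    have "(1 - B\<^sup>2)\<^sup>2 < 1 + B^4" using assms by (simp add: power2_eq_square eval_nat_numeral algebra_simps)
    then have "1 < (1 + B^4) / (1 - B\<^sup>2)\<^sup>2" using pos by (simp add: less_divide_eq)
    then have "exp (-B\<^sup>2/2) * 1 < exp (-B\<^sup>2/2) * ((1 + B^4) / (1 - B\<^sup>2)\<^sup>2)"
      by (intro mult_strict_left_mono) auto
    then have "exp (-B\<^sup>2/2) / sqrt (2*pi) < (exp (-B\<^sup>2/2) * ((1 + B^4) / (1 - B\<^sup>2)\<^sup>2)) / sqrt (2*pi)"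
      by (intro divide_strict_right_mono) auto
    then show ?thesis by (simp add: std_normal_density_def)
  qed
  ultimately show ?thesis by blast
qed

lemma EB_strict: assumes "0 < a" "a < b" "b < 1" shows "EB b < EB a"
  using assms by (intro DERIV_neg_imp_decreasing[of a b EB]) (auto intro!: EB_deriv)

lemma EB_cont: assumes "0 < a" "b < 1" shows "continuous_on {a..b} EB"
proof (intro continuous_at_imp_continuous_on ballI)
  fix x assume "x \<in> {a..b}"
  then obtain D where "(EB has_real_derivative D) (at x)" using EB_deriv[of x] assms by auto
  then show "isCont EB x" by (rule DERIV_isCont)
qed

lemma sqrt2pi_bounds: "12/5 \<le> sqrt (2*pi)" "sqrt (2*pi) \<le> 3"
proof -
  show "12/5 \<le> sqrt (2*pi)" using pi_approx by (intro real_le_rsqrt) (simp add: power2_eq_square)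
  have "2*pi \<le> 3\<^sup>2" using pi_less_4 by simp
  then show "sqrt (2*pi) \<le> 3" by (metis real_sqrt_le_iff real_sqrt_abs abs_numeral)
qed

lemma EB_71: "EB (71/100) > 0"
proof -
  have e: "exp (-(71/100::real)\<^sup>2/2) \<le> 1 / (1 + (71/100)\<^sup>2/2)"
  proof -
    have "1 + (71/100::real)\<^sup>2/2 \<le> exp ((71/100)\<^sup>2/2)" by (rule exp_ge_add_one_self)
    then show ?thesis unfolding exp_minus inverse_eq_divide minus_divide_left[symmetric]
      by (intro divide_left_mono) (auto intro!: mult_pos_pos add_pos_nonneg)
  qed
  have "(71/100 * exp (-(71/100::real)\<^sup>2/2) / (1 - (71/100)\<^sup>2)) \<le> (71/100 * (1 / (1 + (71/100)\<^sup>2/2)) / (1 - (71/100)\<^sup>2))"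
    using e by (intro divide_right_mono mult_left_mono) (auto simp: power2_eq_square)
  also have "\<dots> < 1/2 * (12/5)" by (simp add: power2_eq_square divide_simps)
  also have "\<dots> \<le> 1/2 * sqrt (2*pi)" using sqrt2pi_bounds by simp
  finally have "(71/100 * exp (-(71/100::real)\<^sup>2/2) / (1 - (71/100)\<^sup>2)) < 1/2 * sqrt (2*pi)" .
  then have "(71/100 * exp (-(71/100::real)\<^sup>2/2) / (1 - (71/100)\<^sup>2)) / sqrt (2*pi) < 1/2"
    by (subst pos_divide_less_eq) (auto simp: ac_simps)
  moreover have "Phi (71/100) \<ge> 1/2" using Phi_mono[of 0 "71/100"] Phi_0 by simp
  ultimately show ?thesis unfolding EB_def by simp
qed

lemma EB_95: "EB (95/100) < 0"
proof -
  have e: "1 - (95/100::real)\<^sup>2/2 \<le> exp (-(95/100::real)\<^sup>2/2)"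
    using exp_ge_add_one_self[of "-(95/100::real)\<^sup>2/2"] by simp
  have "1 * 3 < (95/100 * (1 - (95/100::real)\<^sup>2/2) / (1 - (95/100)\<^sup>2))" by (simp add: power2_eq_square divide_simps)
  also have "\<dots> \<le> (95/100 * exp (-(95/100::real)\<^sup>2/2) / (1 - (95/100)\<^sup>2))"
    using e by (intro divide_right_mono mult_left_mono) (auto simp: power2_eq_square)
  finally have "1 * sqrt (2*pi) < (95/100 * exp (-(95/100::real)\<^sup>2/2) / (1 - (95/100)\<^sup>2))"
    using sqrt2pi_bounds by linarith
  then have "1 < (95/100 * exp (-(95/100::real)\<^sup>2/2) / (1 - (95/100)\<^sup>2)) / sqrt (2*pi)"
    by (subst less_divide_eq_1_pos) auto
  then show ?thesis unfolding EB_def using Phi_le1[of "95/100"] by linarith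
qed

lemma eqn_iff: assumes "0 < B" "B < 1"
  shows "(sqrt (2*pi) * (1 - B\<^sup>2) * exp (B\<^sup>2/2) * Phi B = B) \<longleftrightarrow> EB B = 0"
proof -
  have B1: "B\<^sup>2 < 1" using assms power_strict_mono[of B 1 2] by auto
  define k where "k = sqrt (2*pi) * (1 - B\<^sup>2) * exp (B\<^sup>2/2)"
  have kpos: "k > 0" using B1 unfolding k_def by auto
  have "(B * exp (-B\<^sup>2/2) / (1 - B\<^sup>2)) / sqrt (2*pi) = B / k"
    unfolding k_def using B1 by (simp add: exp_minus field_simps)
  then have "EB B = Phi B - B / k" by (simp add: EB_def)
  then show ?thesis using kpos unfolding k_def[symmetric] by (auto simp: field_simps)
qed

lemma no_root_ge1: assumes "1 \<le> B" shows "sqrt (2*pi) * (1 - B\<^sup>2) * exp (B\<^sup>2/2) * Phi B \<noteq> B"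
proof -
  have "Phi B \<ge> 1/2" using Phi_mono[of 0 B] Phi_0 assms by simp
  moreover have "1 - B\<^sup>2 \<le> 0" using assms power_mono[of 1 B 2] by simp
  ultimately have "sqrt (2*pi) * (1 - B\<^sup>2) * exp (B\<^sup>2/2) * Phi B \<le> 0"
    by (intro mult_nonpos_nonneg mult_nonpos_nonneg[of "sqrt (2*pi) * (1 - B\<^sup>2)"] mult_nonneg_nonpos) auto
  then show ?thesis using assms by auto
qed

lemma Bstar_ex1: "\<exists>!B. 0 < B \<and> sqrt (2*pi) * (1 - B\<^sup>2) * exp (B\<^sup>2/2) * Phi B = B"
proof -
  obtain x where x: "71/100 \<le> x" "x \<le> 95/100" "EB x = 0"
    using IVT2'[of EB "95/100" 0 "71/100"] EB_71 EB_95 EB_cont[of "71/100" "95/100"] by force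
  have ex: "0 < x \<and> sqrt (2*pi) * (1 - x\<^sup>2) * exp (x\<^sup>2/2) * Phi x = x"
    using x eqn_iff[of x] by auto
  show ?thesis
  proof (rule ex1I[of _ x])
    show "0 < x \<and> sqrt (2*pi) * (1 - x\<^sup>2) * exp (x\<^sup>2/2) * Phi x = x" by (rule ex)
    fix y assume y: "0 < y \<and> sqrt (2*pi) * (1 - y\<^sup>2) * exp (y\<^sup>2/2) * Phi y = y"
    then have y1: "y < 1" using no_root_ge1[of y] by force
    then have ey: "EB y = 0" using y eqn_iff[of y] by auto
    show "y = x"
    proof (rule ccontr)
      assume "y \<noteq> x"
      then consider "y < x" | "x < y" by linarith
      then show False
      proof cases
        case 1 then show ?thesis using EB_strict[of y x] y ey x by auto
      next
        case 2 then show ?thesis using EB_strict[of x y] y1 ey x by auto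
      qed
    qed
  qed
qed

lemma Bstar_eq: "0 < Bstar" "sqrt (2*pi) * (1 - Bstar\<^sup>2) * exp (Bstar\<^sup>2/2) * Phi Bstar = Bstar"
  using theI'[OF Bstar_ex1] unfolding Bstar_def by auto

lemma Bstar_lt1: "Bstar < 1"
  using no_root_ge1[of Bstar] Bstar_eq(2) by linarith

lemma Bstar_ge: "71/100 \<le> Bstar"
proof (rule ccontr)
  assume "\<not> 71/100 \<le> Bstar"
  then have "EB (71/100) < EB Bstar" using EB_strict[of Bstar "71/100"] Bstar_eq by auto
  moreover have "EB Bstar = 0" using eqn_iff Bstar_eq Bstar_lt1 by auto
  ultimately show False using EB_71 by simp
qed

lemma Bstar_sq: "1/2 < Bstar\<^sup>2" "Bstar\<^sup>2 < 1"
proof -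
  have "(71/100)\<^sup>2 \<le> Bstar\<^sup>2" using Bstar_ge by (intro power_mono) auto
  then show "1/2 < Bstar\<^sup>2" by (simp add: power2_eq_square)
  show "Bstar\<^sup>2 < 1" using Bstar_lt1 Bstar_eq power_strict_mono[of Bstar 1 2] by auto
qed

lemma sqd: "sqrt (2*pi) / (2*pi) = 1 / sqrt (2*pi)"
  by (metis real_div_sqrt divide_divide_eq_right mult.commute div_by_1 less_eq_real_def pi_gt_zero mult_pos_pos zero_less_numeral)

lemma u_deriv: "(u has_real_derivative (2 * C * Phi (-C))) (at C)"
proof -
  have da: "((\<lambda>C. 1 - C\<^sup>2) has_real_derivative -2*C) (at C)"
    by (auto intro!: derivative_eq_intros)
  have db: "((\<lambda>C. Phi (-C)) has_real_derivative std_normal_density (-C) * -1) (at C)"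
    by (rule DERIV_chain2[OF Phi_deriv DERIV_minus[OF DERIV_ident]])
  have dc: "((\<lambda>C. C / sqrt (2*pi)) has_real_derivative 1 / sqrt (2*pi)) (at C)"
    by (rule DERIV_cdivide[OF DERIV_ident])
  have de: "((\<lambda>C. exp(-C\<^sup>2/2)) has_real_derivative exp(-C\<^sup>2/2) * (-C)) (at C)"
    by (auto intro!: derivative_eq_intros)
  show ?thesis
    unfolding u_def[abs_def]
    apply (rule DERIV_cong[OF DERIV_diff[OF DERIV_diff[OF DERIV_const DERIV_mult[OF da db]] DERIV_mult[OF dc de]]])
    apply (simp add: std_normal_density_def field_simps power2_eq_square)
    done
qed

lemma u_cont: "continuous_on S u"
  by (intro continuous_at_imp_continuous_on ballI DERIV_isCont[OF u_deriv])

lemma u_strict: assumes "a < b" "b < 0" shows "u b < u a"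
proof (rule DERIV_neg_imp_decreasing[OF assms(1)])
  fix x assume x: "a \<le> x" "x \<le> b"
  then have "Phi (-x) \<ge> 1/2" using Phi_mono[of 0 "-x"] Phi_0 assms by simp
  then have p: "0 < Phi (-x)" by linarith
  have "2 * x < 0" using x assms by linarith
  then have "2 * x * Phi (-x) < 0" using p by (rule mult_neg_pos)
  then show "\<exists>y. (u has_real_derivative y) (at x) \<and> y < 0" using u_deriv by blast
qed

lemma Cstar_ex1: "\<exists>!C. C < 0 \<and> u C = 0"
proof -
  have u0: "u 0 < 0" using Bstar_sq Phi_0 by (simp add: u_def)
  have "u (-1) = (1 - Bstar\<^sup>2) + exp (-(1/2)) / sqrt (2*pi)" by (simp add: u_def)
  moreover have "0 < exp (-(1/2)) / sqrt (2*pi)" by simp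
  ultimately have u1: "u (-1) > 0" using Bstar_sq by linarith
  obtain x where x: "-1 \<le> x" "x \<le> 0" "u x = 0"
    using IVT2'[of u 0 0 "-1"] u0 u1 u_cont by force
  have xneg: "x < 0" using x u0 by (cases "x = 0") auto
  show ?thesis
  proof (rule ex1I[of _ x])
    show "x < 0 \<and> u x = 0" using xneg x by simp
    fix y assume y: "y < 0 \<and> u y = 0"
    show "y = x"
    proof (rule ccontr)
      assume "y \<noteq> x"
      then consider "y < x" | "x < y" by linarith
      then show False
        by cases (use u_strict[of y x] u_strict[of x y] y x xneg in auto)
    qed
  qed
qed

lemma Cstar_neg: "Cstar < 0"
  using theI'[OF Cstar_ex1] unfolding Cstar_def by auto
lemma H_derivs:
  fixes m :: "real \<Rightarrow> real" and c t x :: real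
  assumes md: "\<And>z. (m has_real_derivative (z * m z + c)) (at z)" and t1: "t < 1"
  defines "q \<equiv> sqrt (1 - t)"
  shows "((\<lambda>s. sqrt (1 - s) * m (x / sqrt (1 - s))) has_real_derivative
            ((x/q) * ((x/q) * m (x/q) + c) - m (x/q)) / (2*q)) (at t)"
    and "\<And>y. ((\<lambda>y. sqrt (1 - t) * m (y / sqrt (1 - t))) has_real_derivative ((y/q) * m (y/q) + c)) (at y)"
    and "\<And>y. ((\<lambda>y. (y/q) * m (y/q) + c) has_real_derivative (m (y/q) + (y/q) * ((y/q) * m (y/q) + c)) / q) (at y)"
    and "((x/q) * ((x/q) * m (x/q) + c) - m (x/q)) / (2*q) - x / (1 - t) * ((x/q) * m (x/q) + c)
          + 1/2 * ((m (x/q) + (x/q) * ((x/q) * m (x/q) + c)) / q) = 0"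
proof -
  have qpos: "q > 0" using t1 by (simp add: q_def)
  have qq: "q * q = 1 - t" using t1 by (simp add: q_def)
  have sq: "((\<lambda>s. sqrt (1 - s)) has_real_derivative (- 1 / (2*q))) (at t)"
    using t1 unfolding q_def by (auto intro!: derivative_eq_intros simp: inverse_eq_divide)
  have d1: "((\<lambda>s. x / sqrt (1 - s)) has_real_derivative (x / (2 * q * q * q))) (at t)"
    using t1 qpos qq unfolding q_def by (auto intro!: derivative_eq_intros simp: field_simps)
  have d2: "((\<lambda>s. m (x / sqrt (1 - s))) has_real_derivative ((x/q) * m (x/q) + c) * (x / (2 * q * q * q))) (at t)"
    using DERIV_chain2[OF md d1] by (simp add: q_def)
  have "((\<lambda>s. sqrt (1 - s) * m (x / sqrt (1 - s))) has_real_derivative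
        (- 1 / (2*q)) * m (x / q) + q * (((x/q) * m (x/q) + c) * (x / (2 * q * q * q)))) (at t)"
    using DERIV_mult[OF sq d2] by (simp add: q_def)
  moreover have "(- 1 / (2*q)) * m (x / q) + q * (((x/q) * m (x/q) + c) * (x / (2 * q * q * q)))
     = ((x/q) * ((x/q) * m (x/q) + c) - m (x/q)) / (2*q)"
    using qpos by (simp add: field_simps)
  ultimately show "((\<lambda>s. sqrt (1 - s) * m (x / sqrt (1 - s))) has_real_derivative
            ((x/q) * ((x/q) * m (x/q) + c) - m (x/q)) / (2*q)) (at t)" by simp
  fix y
  have e1: "((\<lambda>y. y / q) has_real_derivative 1/q) (at y)"
    using qpos by (auto intro!: derivative_eq_intros)
  have "((\<lambda>y. q * m (y / q)) has_real_derivative q * (((y/q) * m (y/q) + c) * (1/q))) (at y)"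
    using DERIV_cmult[OF DERIV_chain2[OF md e1]] .
  then show "((\<lambda>y. sqrt (1 - t) * m (y / sqrt (1 - t))) has_real_derivative ((y/q) * m (y/q) + c)) (at y)"
    using qpos by (simp add: q_def)
  note DERIV_add[OF DERIV_mult[OF e1 DERIV_chain2[OF md e1]] DERIV_const[of c]]
  then show "((\<lambda>y. (y/q) * m (y/q) + c) has_real_derivative (m (y/q) + (y/q) * ((y/q) * m (y/q) + c)) / q) (at y)"
    using qpos by (simp add: field_simps)
next
  have qpos: "q > 0" using t1 by (simp add: q_def)
  have qq: "1 - t = q * q" using t1 by (simp add: q_def)
  show "((x/q) * ((x/q) * m (x/q) + c) - m (x/q)) / (2*q) - x / (1 - t) * ((x/q) * m (x/q) + c)
          + 1/2 * ((m (x/q) + (x/q) * ((x/q) * m (x/q) + c)) / q) = 0"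
    unfolding qq using qpos by (simp add: field_simps)
qed

lemma generic_L:
  fixes W :: "real \<Rightarrow> real \<Rightarrow> real" and m :: "real \<Rightarrow> real"
  assumes md: "\<And>z. (m has_real_derivative (z * m z + c)) (at z)" and t1: "t < 1"
    and St: "open St" "t \<in> St" "\<And>s. s \<in> St \<Longrightarrow> W s x = K * (sqrt (1 - s) * m (x / sqrt (1 - s))) + a * x"
    and Sx: "open Sx" "x \<in> Sx" "\<And>y. y \<in> Sx \<Longrightarrow> W t y = K * (sqrt (1 - t) * m (y / sqrt (1 - t))) + a * y"
  shows "(\<lambda>s. W s x) differentiable (at t) \<and>
            (\<lambda>y. W t y) differentiable (at x) \<and>
            (\<lambda>y. deriv (\<lambda>z. W t z) y) differentiable (at x) \<and>
            Lop W t x = - a * x / (1 - t)"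
proof -
  define q where "q = sqrt (1 - t)"
  define D1 where "D1 y = (y/q) * m (y/q) + c" for y
  define D2 where "D2 y = (m (y/q) + (y/q) * ((y/q) * m (y/q) + c)) / q" for y
  define Ht where "Ht = ((x/q) * ((x/q) * m (x/q) + c) - m (x/q)) / (2*q)"
  note HD = H_derivs[OF md t1]
  have dt0: "((\<lambda>s. K * (sqrt (1 - s) * m (x / sqrt (1 - s))) + a * x) has_real_derivative K * Ht + 0) (at t)"
    unfolding Ht_def q_def by (intro DERIV_add DERIV_cmult HD(1)[of x] DERIV_const)
  have dt: "((\<lambda>s. W s x) has_real_derivative K * Ht) (at t)"
    using has_field_derivative_transform_within_open[OF dt0 St(1,2)] St(3) by simp
  have dx: "((\<lambda>y. W t y) has_real_derivative K * D1 y + a) (at y)" if "y \<in> Sx" for y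
  proof -
    have "((\<lambda>y. K * (sqrt (1 - t) * m (y / sqrt (1 - t))) + a * y) has_real_derivative K * D1 y + a * 1) (at y)"
      unfolding D1_def q_def by (intro DERIV_add DERIV_cmult HD(2) DERIV_ident)
    then show ?thesis
      using has_field_derivative_transform_within_open[OF _ Sx(1) that] Sx(3) by simp
  qed
  have deq: "deriv (\<lambda>z. W t z) y = K * D1 y + a" if "y \<in> Sx" for y
    using dx[OF that] by (rule DERIV_imp_deriv)
  have d2: "((\<lambda>y. deriv (\<lambda>z. W t z) y) has_real_derivative K * D2 x) (at x)"
  proof -
    have "((\<lambda>y. K * D1 y + a) has_real_derivative K * D2 x + 0) (at x)"
      unfolding D1_def D2_def q_def by (intro DERIV_add DERIV_cmult HD(3) DERIV_const)
    then show ?thesis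
      using has_field_derivative_transform_within_open[OF _ Sx(1,2)] deq by simp
  qed
  have L: "Lop W t x = K * Ht - x / (1 - t) * (K * D1 x + a) + 1/2 * (K * D2 x)"
    unfolding Lop_def using DERIV_imp_deriv[OF dt] DERIV_imp_deriv[OF dx[OF Sx(2)]] DERIV_imp_deriv[OF d2]
    by simp
  also have "\<dots> = K * (Ht - x / (1 - t) * D1 x + 1/2 * D2 x) - a * x / (1 - t)"
    by (simp add: algebra_simps)
  also have "Ht - x / (1 - t) * D1 x + 1/2 * D2 x = 0"
    using HD(4)[of x] unfolding Ht_def D1_def D2_def q_def .
  finally have "Lop W t x = - a * x / (1 - t)" by simp
  then show ?thesis using dt dx[OF Sx(2)] d2 by (auto simp: real_differentiable_def)
qed

definition m1 :: "real \<Rightarrow> real" where "m1 z = exp (z\<^sup>2/2) * Phi (-z)"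
definition m2 :: "real \<Rightarrow> real" where "m2 z = exp (z\<^sup>2/2) * Phi z"

lemma exp_cancel: "exp (z\<^sup>2/2) * exp (-z\<^sup>2/2) = (1::real)"
  by (simp add: exp_minus)

lemma m1_deriv: "(m1 has_real_derivative (z * m1 z + (- 1 / sqrt (2*pi)))) (at z)"
proof -
  have dE: "((\<lambda>z. exp (z\<^sup>2/2)) has_real_derivative exp (z\<^sup>2/2) * z) (at z)"
    by (auto intro!: derivative_eq_intros)
  have db: "((\<lambda>z. Phi (-z)) has_real_derivative std_normal_density (-z) * -1) (at z)"
    by (rule DERIV_chain2[OF Phi_deriv DERIV_minus[OF DERIV_ident]])
  show ?thesis unfolding m1_def[abs_def]
    apply (rule DERIV_cong[OF DERIV_mult[OF dE db]])
    using exp_cancel[of z] by (simp add: std_normal_density_def algebra_simps)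
qed

lemma m2_deriv: "(m2 has_real_derivative (z * m2 z + 1 / sqrt (2*pi))) (at z)"
proof -
  have dE: "((\<lambda>z. exp (z\<^sup>2/2)) has_real_derivative exp (z\<^sup>2/2) * z) (at z)"
    by (auto intro!: derivative_eq_intros)
  show ?thesis unfolding m2_def[abs_def]
    apply (rule DERIV_cong[OF DERIV_mult[OF dE Phi_deriv]])
    using exp_cancel[of z] by (simp add: std_normal_density_def algebra_simps)
qed

lemma sq_div: "s < 1 \<Longrightarrow> (y / sqrt (1 - s))\<^sup>2 / 2 = y\<^sup>2 / (2 * (1 - s))"
  by (simp add: power_divide)

lemma V1_eq: assumes "s < 1" "Cstar * sqrt (1 - s) < y"
  shows "Vstar s y = sqrt (2*pi) * v Cstar * (sqrt (1 - s) * m1 (y / sqrt (1 - s)))"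
  using assms unfolding Vstar_def m1_def sq_div[OF assms(1)] by (simp add: ac_simps)

lemma V2_eq: assumes "s < 1" "y < Cstar * sqrt (1 - s)"
  shows "Vstar s y = sqrt (2*pi) * (1 - Bstar\<^sup>2) * (sqrt (1 - s) * m2 (y / sqrt (1 - s))) - y"
proof -
  have c0: "Cstar * sqrt (1 - s) \<le> 0" using Cstar_neg assms by (simp add: mult_nonpos_nonneg)
  have b0: "0 \<le> Bstar * sqrt (1 - s)" using Bstar_eq assms by simp
  have "Vstar s y = f s y" using assms unfolding Vstar_def by auto
  also have "\<dots> = sqrt (2*pi*(1 - s)) * (1 - Bstar\<^sup>2) * exp (y\<^sup>2 / (2*(1 - s))) * Phi (y / sqrt (1 - s)) - y"
    using assms c0 b0 unfolding f_def U_def by auto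
  also have "\<dots> = sqrt (2*pi) * (1 - Bstar\<^sup>2) * (sqrt (1 - s) * m2 (y / sqrt (1 - s))) - y"
    using assms unfolding m2_def sq_div[OF assms(1)] by (simp add: real_sqrt_mult)
  finally show ?thesis .
qed

lemma cont_sq: "continuous_on UNIV (\<lambda>s::real. c * sqrt (1 - s))"
  by (intro continuous_intros)

theorem lemma3p4:
  shows "(\<forall>t x. 0 \<le> t \<and> t < 1 \<and> x > Cstar * sqrt (1 - t) \<longrightarrow>
            (\<lambda>s. Vstar s x) differentiable (at t) \<and>
            (\<lambda>y. Vstar t y) differentiable (at x) \<and>
            (\<lambda>y. deriv (\<lambda>z. Vstar t z) y) differentiable (at x) \<and>
            Lop Vstar t x = 0)
       \<and> (\<forall>t x. 0 \<le> t \<and> t < 1 \<and> x < Cstar * sqrt (1 - t) \<longrightarrow>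
            (\<lambda>s. Vstar s x) differentiable (at t) \<and>
            (\<lambda>y. Vstar t y) differentiable (at x) \<and>
            (\<lambda>y. deriv (\<lambda>z. Vstar t z) y) differentiable (at x) \<and>
            Lop Vstar t x \<le> 0)"
proof (rule conjI; intro allI impI)
  fix t x :: real assume a: "0 \<le> t \<and> t < 1 \<and> x > Cstar * sqrt (1 - t)"
  have o1: "open ({s. s < 1} \<inter> {s. Cstar * sqrt (1 - s) < x})"
    by (intro open_Int open_Collect_less cont_sq continuous_intros)
  have o2: "open {y. Cstar * sqrt (1 - t) < y}"
    by (intro open_Collect_less continuous_intros)
  have "(\<lambda>s. Vstar s x) differentiable (at t) \<and> (\<lambda>y. Vstar t y) differentiable (at x) \<and>
        (\<lambda>y. deriv (\<lambda>z. Vstar t z) y) differentiable (at x) \<and> Lop Vstar t x = - 0 * x / (1 - t)"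
    apply (rule generic_L[where K="sqrt (2*pi) * v Cstar" and a=0, OF m1_deriv _ o1 _ _ o2])
    using a by (auto simp: V1_eq)
  then show "(\<lambda>s. Vstar s x) differentiable (at t) \<and> (\<lambda>y. Vstar t y) differentiable (at x) \<and>
        (\<lambda>y. deriv (\<lambda>z. Vstar t z) y) differentiable (at x) \<and> Lop Vstar t x = 0" by simp
next
  fix t x :: real assume a: "0 \<le> t \<and> t < 1 \<and> x < Cstar * sqrt (1 - t)"
  have o1: "open ({s. s < 1} \<inter> {s. x < Cstar * sqrt (1 - s)})"
    by (intro open_Int open_Collect_less cont_sq continuous_intros)
  have o2: "open {y. y < Cstar * sqrt (1 - t)}"
    by (intro open_Collect_less continuous_intros)
  have "(\<lambda>s. Vstar s x) differentiable (at t) \<and> (\<lambda>y. Vstar t y) differentiable (at x) \<and>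
        (\<lambda>y. deriv (\<lambda>z. Vstar t z) y) differentiable (at x) \<and> Lop Vstar t x = - (-1) * x / (1 - t)"
    apply (rule generic_L[where K="sqrt (2*pi) * (1 - Bstar\<^sup>2)" and a="-1", OF m2_deriv _ o1 _ _ o2])
    using a by (auto simp: V2_eq)
  moreover have "x < 0" using a Cstar_neg by (smt (verit) mult_nonpos_nonneg real_sqrt_ge_zero)
  ultimately show "(\<lambda>s. Vstar s x) differentiable (at t) \<and> (\<lambda>y. Vstar t y) differentiable (at x) \<and>
        (\<lambda>y. deriv (\<lambda>z. Vstar t z) y) differentiable (at x) \<and> Lop Vstar t x \<le> 0"
    using a by (simp add: divide_nonpos_pos)
qed

end
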